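(* Let $C\subset\mathbb{R}^p$ be a closed convex pointed cone containing $0$ with nonempty interior such that $P\subset\mathrm{int}(C)\cup\{0\}$. If $K\in\mathcal{K}(C,P)$, then $\mathcal{E}(K,P)=\mathcal{PE}(K,P)$.
   Context: $P\subset\mathbb{R}^p$ is a closed convex pointed cone containing $0$ with nonempty interior. For nonempty $S\subset\mathbb{R}^p$ and such a cone $Q$, $\mathcal{E}(S,Q)=\{y\in S:(y-Q)\cap S=\{y\}\}$. Contingent cone of $S$ at $y\in S$: $T_S(y)=\{v:\exists h_k\to0^+,\exists v_k\to v,y+h_kv_k\in S\}$. Properly minimal elements: $\mathcal{PE}(S,P)=\{y\in\mathcal{E}(S,P): T_{S+P}(y)\cap(-P)=\{0\}\}$. $\mathcal{K}(C,P)$ is the set of nonempty compact $K\subset\mathbb{R}^p$ with $\mathcal{E}(K,P)=\mathcal{E}(K,C)$. *)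

theory Defs
  imports "HOL-Analysis.Analysis"
begin

definition ordering_cone :: "'a::euclidean_space set \<Rightarrow> bool" where
  "ordering_cone Q \<longleftrightarrow> closed Q \<and> convex Q \<and> cone Q \<and> 0 \<in> Q \<and>
     Q \<inter> uminus ` Q = {0} \<and> interior Q \<noteq> {}"

definition minimal_elems :: "'a::euclidean_space set \<Rightarrow> 'a set \<Rightarrow> 'a set" where
  "minimal_elems S Q = {y \<in> S. ((\<lambda>q. y - q) ` Q) \<inter> S = {y}}"

definition contingent_cone :: "'a::euclidean_space set \<Rightarrow> 'a \<Rightarrow> 'a set" where
  "contingent_cone S y = {v. \<exists>h :: nat \<Rightarrow> real. \<exists>w :: nat \<Rightarrow> 'a.
      (\<forall>k. h k > 0) \<and> h \<longlonglongrightarrow> 0 \<and> w \<longlonglongrightarrow> v \<and> (\<forall>k. y + h k *\<^sub>R w k \<in> S)}"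

text \<open>Properly minimal elements (Henig/Borwein-type via contingent cone of S + P).\<close>
definition properly_minimal_elems :: "'a::euclidean_space set \<Rightarrow> 'a set \<Rightarrow> 'a set" where
  "properly_minimal_elems S P = {y \<in> minimal_elems S P.
      contingent_cone (S + P) y \<inter> uminus ` P = {0}}"

definition K_class :: "'a::euclidean_space set \<Rightarrow> 'a set \<Rightarrow> 'a set set" where
  "K_class C P = {K. K \<noteq> {} \<and> compact K \<and> minimal_elems K P = minimal_elems K C}"

end

theory Submission
  imports Defs
begin

theorem proposition4p14:
  fixes C P :: "(real ^ 'p) set" and K :: "(real ^ 'p) set"
  assumes "ordering_cone P"
    and "ordering_cone C"
    and "P \<subseteq> interior C \<union> {0}"
    and "K \<in> K_class C P"
  shows "minimal_elems K P = properly_minimal_elems K P"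
proof
  show "properly_minimal_elems K P \<subseteq> minimal_elems K P"
    unfolding properly_minimal_elems_def by auto
next
  have P0: "0 \<in> P" and Cc: "convex C \<and> cone C" and Cp: "C \<inter> uminus ` C = {0}"
    and Pc: "convex P \<and> cone P"
    using assms(1,2) unfolding ordering_cone_def by auto
  have Cadd: "\<And>x y. x \<in> C \<Longrightarrow> y \<in> C \<Longrightarrow> x + y \<in> C"
   and Cmul: "\<And>x c. x \<in> C \<Longrightarrow> c \<ge> 0 \<Longrightarrow> c *\<^sub>R x \<in> C"
    using Cc unfolding convex_cone by auto
  have PC: "P \<subseteq> C" using assms(3) interior_subset assms(2) unfolding ordering_cone_def by auto
  have EKC: "minimal_elems K P = minimal_elems K C" using assms(4) unfolding K_class_def by auto
  show "minimal_elems K P \<subseteq> properly_minimal_elems K P"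
  proof
    fix y assume yP: "y \<in> minimal_elems K P"
    then have yC: "y \<in> minimal_elems K C" using EKC by simp
    have yK: "y \<in> K" using yP unfolding minimal_elems_def by auto
    have key: "\<And>z. z \<in> K \<Longrightarrow> y - z \<in> C \<Longrightarrow> z = y"
    proof -
      fix z assume "z \<in> K" "y - z \<in> C"
      then have "z \<in> ((\<lambda>q. y - q) ` C) \<inter> K" by force
      then show "z = y" using yC unfolding minimal_elems_def by auto
    qed
    have "contingent_cone (K + P) y \<inter> uminus ` P = {0}"
    proof
      have "0 \<in> contingent_cone (K + P) y"
        unfolding contingent_cone_def
      proof (intro CollectI exI conjI allI)
        show "(\<lambda>k. 1 / (real k + 1)) \<longlonglongrightarrow> 0" using LIMSEQ_inverse_real_of_nat by (simp add: inverse_eq_divide add.commute)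
        show "(\<lambda>k. 0) \<longlonglongrightarrow> (0 :: real^'p)" by simp
        fix k
        show "(0::real) < 1 / (real k + 1)" by simp
        have "y + 0 \<in> K + P" using yK P0 by blast
        then show "y + (1 / (real k + 1)) *\<^sub>R (0::real^'p) \<in> K + P" by simp
      qed
      then show "{0} \<subseteq> contingent_cone (K + P) y \<inter> uminus ` P" using P0 by force
    next
      show "contingent_cone (K + P) y \<inter> uminus ` P \<subseteq> {0}"
      proof (rule ccontr)
        assume "\<not> ?thesis"
        then obtain v where vT: "v \<in> contingent_cone (K + P) y" and vP: "-v \<in> P" and v0: "v \<noteq> 0"
          by force
        then have "-v \<in> interior C" using assms(3) by auto
        then obtain r where r: "r > 0" "ball (-v) r \<subseteq> C" by (meson open_contains_ball open_interior interior_subset subset_trans)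
        obtain h w where h: "\<forall>k. h k > 0" "h \<longlonglongrightarrow> 0" and w: "w \<longlonglongrightarrow> v"
          and hw: "\<forall>k. y + h k *\<^sub>R w k \<in> K + P"
          using vT unfolding contingent_cone_def by blast
        have ev: "\<forall>\<^sub>F k in sequentially. dist (w k) v < r" using w r(1) by (simp add: tendsto_iff)
        have ev2: "\<forall>\<^sub>F k in sequentially. w k = 0"
          using ev
        proof (rule eventually_mono)
          fix k assume "dist (w k) v < r"
          then have "-w k \<in> ball (-v) r" by (simp add: dist_norm norm_minus_commute[of "w k" v] dist_commute)
          then have mw: "- w k \<in> C" using r by auto
          obtain a b where ab: "a \<in> K" "b \<in> P" "y + h k *\<^sub>R w k = a + b"
            using hw by (meson set_plus_elim)
          have "y - a = h k *\<^sub>R (- w k) + b" using ab(3) by (simp add: algebra_simps)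
          moreover have "h k *\<^sub>R (- w k) \<in> C" using Cmul mw h(1) less_imp_le by blast
          moreover have "b \<in> C" using PC ab(2) by blast
          ultimately have "y - a \<in> C" using Cadd[of "h k *\<^sub>R (- w k)" b] by (simp add: add.commute)
          then have "a = y" using key ab(1) by blast
          then have "h k *\<^sub>R w k = b" using ab(3) by simp
          then have "w k = (1 / h k) *\<^sub>R b" proof -
            have "(1 / h k) *\<^sub>R b = (1 / h k) *\<^sub>R (h k *\<^sub>R w k)" using \<open>h k *\<^sub>R w k = b\<close> by simp
            also have "\<dots> = w k" using h(1) by (simp add: less_imp_neq[symmetric])
            finally show ?thesis by simp
          qed
          then have "w k \<in> C" using Cmul[of b "1 / h k"] PC ab(2) h(1) less_imp_le by auto
          moreover have "w k \<in> uminus ` C" using mw by (metis image_eqI minus_minus)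
          ultimately show "w k = 0" using Cp by blast
        qed
        have "(\<lambda>k. w k) \<longlonglongrightarrow> 0" using ev2 by (simp add: tendsto_eventually)
        then have "v = 0" using w LIMSEQ_unique by blast
        then show False using v0 by simp
      qed
    qed
    then show "y \<in> properly_minimal_elems K P" using yP unfolding properly_minimal_elems_def by auto
  qed
qed

end
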